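(* Fix an execution path of naive-fvs$(G,k,\emptyset)$ that leads to a solution, with $V_-=\{x_1,\dots,x_s\}$, $F'$, $d^*$ and $\delta$ as defined in the context. For every $i\in\{1,\dots,s\}$, $\sum_{u\in F'}\delta(u,x_i)\le d^*(x_i)$.
   Context: All graphs are finite, simple and undirected; $d_G(v)$ denotes the degree of $v$ in $G$ (taken to be $0$ if $v\notin V(G)$), $G-S$ denotes deletion of a vertex set $S$, and $G[S]$ the induced subgraph. A feedback vertex set of $G$ is a set $V_-\subseteq V(G)$ such that $G-V_-$ is a forest. Algorithm naive-fvs$(G,k,F)$ (with $k$ an integer and $F\subseteq V(G)$ inducing a forest) returns a set of vertices or ``NO'' as follows (all choices among several candidates are arbitrary; degrees are in the current graph $G$): (0) If $k<0$ return NO; if $V(G)=\emptyset$ return $\emptyset$. (1) If some vertex $v$ has degree less than $2$, return naive-fvs$(G-\{v\},k,F\setminus\{v\})$. (2) If some $v\in V(G)\setminus F$ has two neighbors in the same connected component of $G[F]$, let $X=$ naive-fvs$(G-\{v\},k-1,F)$ and return $X\cup\{v\}$ (NO if $X$ is NO). (3) Pick $v\in V(G)\setminus F$ of maximum degree. (4) If $d(v)=2$: set $X=\emptyset$; while $G$ contains a cycle $C$, take any vertex $x$ of $C$ not in $F$, add $x$ to $X$ and delete $x$ from $G$; then return $X$ if $|X|\le k$, else NO. (5) Let $X=$ naive-fvs$(G-\{v\},k-1,F)$; if $X$ is not NO, return $X\cup\{v\}$. (6) Return naive-fvs$(G,k,F\cup\{v\})$. An execution path is a sequence of calls $c_0,c_1,\dots,c_t$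 where $c_0=$ naive-fvs$(G,k,\emptyset)$; for each $j<t$, $c_{j+1}$ is the recursive call made by $c_j$ in step 1 or step 2, or, if $c_j$ reaches step 5, either the call of step 5 or the call of step 6 (the latter considered even if the algorithm would not actually make it); and $c_t$ terminates in step 0 or step 4 without recursion. It leads to a solution if $c_t$ returns a set (not NO). Along the path, vertices are deleted from the current graph one at a time (in steps 1, 2, 5 and in the loop of step 4 of $c_t$). $V_-$ denotes the set of vertices deleted in step 2, in step 5 (when the path follows the step-5 call), and in the loop of step 4 of $c_t$; $F'$ denotes the set of vertices added to $F$ by step 6 (when the path follows the step-6 call). Let $x_1,\dots,x_s$ be the vertices of $V_-$ in the order they are deleted. For $v\in V_-\cup F'$, $d^*(v)$ is the degree of $v$ in the current graph at the moment $v$ is deleted (for $v\in V_-$) or moved into $F$ (for $v\in F'$). Let $G_i$ and $F_i$ be the current graph and current set $F$ immediately before $x_i$ is deleted, and let $G_{s+1}$ be the current graph at the end of the path. For $u\in F'$ and $1\le i\le s$, the number of effective decrements of $u$ incurred by $x_i$ is $\delta(u,x_i)=\max\{d_{G_i}(u),2\}-\max\{d_{G_{i+1}}(u),2\}$ if $u\in F_i$, and $\delta(u,x_i)=0$ otherwise. *)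

theory Defs
  imports Main
begin

text \<open>A graph is a pair (vertex set, edge set); edges are 2-element vertex sets.\<close>
type_synonym 'a graph = "'a set \<times> 'a set set"

definition verts :: "'a graph \<Rightarrow> 'a set" where "verts G = fst G"
definition edges :: "'a graph \<Rightarrow> 'a set set" where "edges G = snd G"

definition simple_graph :: "'a graph \<Rightarrow> bool" where
  "simple_graph G \<longleftrightarrow> finite (verts G) \<and>
     (\<forall>e\<in>edges G. \<exists>u v. e = {u, v} \<and> u \<noteq> v \<and> u \<in> verts G \<and> v \<in> verts G)"

definition nbrs :: "'a graph \<Rightarrow> 'a \<Rightarrow> 'a set" where
  "nbrs G v = {u. {u, v} \<in> edges G}"

text \<open>Degree; it is 0 for vertices not in the graph (no incident edges).\<close>
definition deg :: "'a graph \<Rightarrow> 'a \<Rightarrow> nat" where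
  "deg G v = (if v \<in> verts G then card (nbrs G v) else 0)"

definition del_verts :: "'a graph \<Rightarrow> 'a set \<Rightarrow> 'a graph" where
  "del_verts G S = (verts G - S, {e \<in> edges G. e \<inter> S = {}})"

definition induced :: "'a graph \<Rightarrow> 'a set \<Rightarrow> 'a graph" where
  "induced G S = (verts G \<inter> S, {e \<in> edges G. e \<subseteq> S})"

definition is_cycle :: "'a graph \<Rightarrow> 'a list \<Rightarrow> bool" where
  "is_cycle G cs \<longleftrightarrow> distinct cs \<and> length cs \<ge> 3 \<and> set cs \<subseteq> verts G \<and>
     (\<forall>i < length cs. {cs ! i, cs ! ((i + 1) mod length cs)} \<in> edges G)"

definition has_cycle :: "'a graph \<Rightarrow> bool" where
  "has_cycle G \<longleftrightarrow> (\<exists>cs. is_cycle G cs)"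

definition connected_in :: "'a graph \<Rightarrow> 'a \<Rightarrow> 'a \<Rightarrow> bool" where
  "connected_in G u w \<longleftrightarrow> u \<in> verts G \<and> w \<in> verts G \<and>
     (u, w) \<in> {(a, b). {a, b} \<in> edges G}\<^sup>*"

text \<open>A call state: current graph, current k, current F.\<close>
type_synonym 'a fstate = "'a graph \<times> int \<times> 'a set"

definition sG :: "'a fstate \<Rightarrow> 'a graph" where "sG st = fst st"
definition sk :: "'a fstate \<Rightarrow> int" where "sk st = fst (snd st)"
definition sF :: "'a fstate \<Rightarrow> 'a set" where "sF st = snd (snd st)"

text \<open>Events along an execution path: the vertex deleted in step 1, step 2, step 5
  (following the step-5 call), added to F in step 6 (following the step-6 call),
  or deleted in the loop of step 4 of the last call.\<close>
datatype 'a fvs_event = Ev1 'a | Ev2 'a | Ev5 'a | Ev6 'a | Ev4 'a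

fun apply_ev :: "'a fvs_event \<Rightarrow> 'a fstate \<Rightarrow> 'a fstate" where
  "apply_ev (Ev1 v) (G, k, F) = (del_verts G {v}, k, F - {v})"
| "apply_ev (Ev2 v) (G, k, F) = (del_verts G {v}, k - 1, F)"
| "apply_ev (Ev5 v) (G, k, F) = (del_verts G {v}, k - 1, F)"
| "apply_ev (Ev6 v) (G, k, F) = (G, k, F \<union> {v})"
| "apply_ev (Ev4 v) (G, k, F) = (del_verts G {v}, k, F)"

definition st_at :: "'a graph \<Rightarrow> int \<Rightarrow> 'a fvs_event list \<Rightarrow> nat \<Rightarrow> 'a fstate" where
  "st_at G k evs j = fold apply_ev (take j evs) (G, k, {})"

text \<open>Step 0 does not fire.\<close>
definition no_step0 :: "'a fstate \<Rightarrow> bool" where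
  "no_step0 st \<longleftrightarrow> sk st \<ge> 0 \<and> verts (sG st) \<noteq> {}"

definition step1_cond :: "'a fstate \<Rightarrow> 'a \<Rightarrow> bool" where
  "step1_cond st v \<longleftrightarrow> v \<in> verts (sG st) \<and> deg (sG st) v < 2"

definition step2_cond :: "'a fstate \<Rightarrow> 'a \<Rightarrow> bool" where
  "step2_cond st v \<longleftrightarrow> v \<in> verts (sG st) - sF st \<and>
     (\<exists>u w. u \<noteq> w \<and> u \<in> nbrs (sG st) v \<inter> sF st \<and> w \<in> nbrs (sG st) v \<inter> sF st \<and>
        connected_in (induced (sG st) (sF st)) u w)"

definition reaches_step3 :: "'a fstate \<Rightarrow> bool" where
  "reaches_step3 st \<longleftrightarrow> no_step0 st \<and> \<not> (\<exists>v. step1_cond st v) \<and> \<not> (\<exists>v. step2_cond st v)"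

text \<open>v is a legitimate choice in step 3 (a vertex of V(G) \ F of maximum degree).\<close>
definition max_choice :: "'a fstate \<Rightarrow> 'a \<Rightarrow> bool" where
  "max_choice st v \<longleftrightarrow> v \<in> verts (sG st) - sF st \<and>
     (\<forall>w \<in> verts (sG st) - sF st. deg (sG st) w \<le> deg (sG st) v)"

text \<open>Legality of an event of a non-final call (steps 1, 2, 5, 6).\<close>
fun legal_ev :: "'a fstate \<Rightarrow> 'a fvs_event \<Rightarrow> bool" where
  "legal_ev st (Ev1 v) \<longleftrightarrow> no_step0 st \<and> step1_cond st v"
| "legal_ev st (Ev2 v) \<longleftrightarrow> no_step0 st \<and> \<not> (\<exists>w. step1_cond st w) \<and> step2_cond st v"
| "legal_ev st (Ev5 v) \<longleftrightarrow> reaches_step3 st \<and> max_choice st v \<and> deg (sG st) v \<noteq> 2"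
| "legal_ev st (Ev6 v) \<longleftrightarrow> reaches_step3 st \<and> max_choice st v \<and> deg (sG st) v \<noteq> 2"
| "legal_ev st (Ev4 v) \<longleftrightarrow> False"

definition step4_applies :: "'a fstate \<Rightarrow> bool" where
  "step4_applies st \<longleftrightarrow> reaches_step3 st \<and> (\<exists>v. max_choice st v \<and> deg (sG st) v = 2)"

text \<open>One iteration of the loop of step 4: delete a vertex not in F lying on a cycle.\<close>
definition loop4_ok :: "'a fstate \<Rightarrow> 'a \<Rightarrow> bool" where
  "loop4_ok st x \<longleftrightarrow> x \<notin> sF st \<and> (\<exists>cs. is_cycle (sG st) cs \<and> x \<in> set cs)"

text \<open>The first m events are the recursive steps (1, 2, 5 or 6) of the calls c_0..c_{t-1};
  the call c_t = st_at G k evs m terminates either in step 0 (returning a set,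
  i.e. k >= 0) or in step 4, whose loop deletes the remaining events' vertices until
  no cycle remains, returning a set iff their number is at most k.\<close>
definition solution_path :: "'a graph \<Rightarrow> int \<Rightarrow> 'a fvs_event list \<Rightarrow> bool" where
  "solution_path G k evs \<longleftrightarrow> (\<exists>m \<le> length evs.
     (\<forall>j < m. legal_ev (st_at G k evs j) (evs ! j)) \<and>
     (\<forall>j. m \<le> j \<and> j < length evs \<longrightarrow>
         (\<exists>x. evs ! j = Ev4 x \<and> loop4_ok (st_at G k evs j) x)) \<and>
     ((m = length evs \<and> \<not> no_step0 (st_at G k evs m) \<and> sk (st_at G k evs m) \<ge> 0) \<or>
      (step4_applies (st_at G k evs m) \<and> \<not> has_cycle (sG (st_at G k evs (length evs))) \<and>
       int (length evs - m) \<le> sk (st_at G k evs m))))"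

text \<open>Events deleting a vertex of V_- (step 2, step 5, step-4 loop).\<close>
fun minus_ev :: "'a fvs_event \<Rightarrow> 'a option" where
  "minus_ev (Ev2 v) = Some v"
| "minus_ev (Ev5 v) = Some v"
| "minus_ev (Ev4 v) = Some v"
| "minus_ev _ = None"

definition Fprime :: "'a fvs_event list \<Rightarrow> 'a set" where
  "Fprime evs = {v. Ev6 v \<in> set evs}"

text \<open>For the V_- deletion at event index j (the graph G_i = st_at .. j), the index of the
  next V_- deletion, or the end of the path (giving G_{i+1}, resp. G_{s+1}).\<close>
definition next_minus :: "'a fvs_event list \<Rightarrow> nat \<Rightarrow> nat" where
  "next_minus evs j = (LEAST j'. j < j' \<and> (j' = length evs \<or> minus_ev (evs ! j') \<noteq> None))"

text \<open>Effective decrements delta(u, x_i), where x_i is deleted at event index j.\<close>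
definition eff_dec :: "'a graph \<Rightarrow> int \<Rightarrow> 'a fvs_event list \<Rightarrow> 'a \<Rightarrow> nat \<Rightarrow> int" where
  "eff_dec G k evs u j =
     (if u \<in> sF (st_at G k evs j)
      then int (max (deg (sG (st_at G k evs j)) u) 2)
           - int (max (deg (sG (st_at G k evs (next_minus evs j))) u) 2)
      else 0)"

end

theory Submission
  imports Defs
begin

lemma verts_del[simp]: "verts (del_verts H S) = verts H - S"
  by (simp add: del_verts_def verts_def)

lemma edges_del: "edges (del_verts H S) = {e \<in> edges H. e \<inter> S = {}}"
  by (simp add: del_verts_def edges_def)

lemma nbrs_del: "w \<noteq> v \<Longrightarrow> nbrs (del_verts H {v}) w = nbrs H w - {v}"
  by (auto simp: nbrs_def edges_del)

lemma simple_del: "simple_graph H \<Longrightarrow> simple_graph (del_verts H {v})"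
  unfolding simple_graph_def edges_del by fastforce

lemma nbrs_sub: "simple_graph H \<Longrightarrow> nbrs H v \<subseteq> verts H"
  unfolding simple_graph_def nbrs_def by (auto simp: doubleton_eq_iff) 

lemma nbrs_self: "simple_graph H \<Longrightarrow> v \<notin> nbrs H v"
  unfolding simple_graph_def nbrs_def by (auto simp: doubleton_eq_iff)

lemma nbrs_fin: "simple_graph H \<Longrightarrow> finite (nbrs H v)"
  using nbrs_sub simple_graph_def finite_subset by metis

lemma nbrs_sym: "w \<in> nbrs H v \<longleftrightarrow> v \<in> nbrs H w"
  by (simp add: nbrs_def insert_commute)

lemma deg_del:
  assumes "simple_graph H" "w \<noteq> v"
  shows "deg (del_verts H {v}) w = deg H w - (if w \<in> nbrs H v then 1 else 0)"
proof (cases "w \<in> verts H")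
  case True
  then show ?thesis using assms nbrs_fin[OF assms(1), of w]
    by (auto simp: deg_def nbrs_del nbrs_sym)
next
  case False
  then show ?thesis using assms nbrs_sub[OF assms(1), of v] by (auto simp: deg_def)
qed

lemma deg_pos:
  assumes "simple_graph H" "w \<in> nbrs H v"
  shows "deg H w \<ge> 1"
proof -
  have "w \<in> verts H" using assms nbrs_sub[OF assms(1)] by blast
  moreover have "v \<in> nbrs H w" using assms nbrs_sym by metis
  ultimately show ?thesis using nbrs_fin[OF assms(1), of w]
    by (auto simp: deg_def Suc_le_eq card_gt_0_iff)
qed

lemma deg_del_self: "deg (del_verts H {v}) v = 0"
  by (simp add: deg_def)

definition phi :: "bool \<Rightarrow> 'a set \<Rightarrow> 'a set \<Rightarrow> 'a graph \<Rightarrow> int" where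
  "phi c A U H = (\<Sum>w\<in>U. (if c \<and> w \<in> verts H then 2 - int (min (deg H w) 2) else 0)
                         - (if w \<in> A then int (max (deg H w) 2) else 0))"

lemma phi_del:
  assumes sg: "simple_graph H" and vH: "v \<in> verts H" and sub: "verts H \<subseteq> U" and fU: "finite U"
  shows "phi c A U (del_verts H {v}) \<le> phi c A U H + int (deg H v)
      - (if c then 2 - int (min (deg H v) 2) else 0)
      + (if v \<in> A then int (max (deg H v) 2) - 2 else 0)"
proof -
  let ?H' = "del_verts H {v}"
  define f where "f = (\<lambda>H w. (if c \<and> w \<in> verts H then 2 - int (min (deg H w) 2) else 0)
                         - (if w \<in> A then int (max (deg H w) 2) else 0))"
  define E where "E = - (if c then 2 - int (min (deg H v) 2) else 0)
      + (if v \<in> A then int (max (deg H v) 2) - 2 else 0)"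
  have pt: "f ?H' w \<le> f H w + (if w \<in> nbrs H v then 1 else 0) + (if w = v then E else 0)" for w
  proof (cases "w = v")
    case True
    then show ?thesis using nbrs_self[OF sg, of v] vH
      by (simp add: f_def E_def deg_del_self)
  next
    case False
    note d = deg_del[OF sg False]
    show ?thesis
    proof (cases "w \<in> verts H")
      case True
      show ?thesis
      proof (cases "w \<in> nbrs H v")
        case True
        have "deg H w \<ge> 1" using deg_pos[OF sg True] .
        then show ?thesis using d True \<open>w \<noteq> v\<close> \<open>w \<in> verts H\<close>
          by (auto simp: f_def)
      next
        case False
        then show ?thesis using d \<open>w \<noteq> v\<close> \<open>w \<in> verts H\<close> by (auto simp: f_def)
      qed
    next
      case False
      then have "w \<notin> nbrs H v" using nbrs_sub[OF sg] by blast
      then show ?thesis using d False \<open>w \<noteq> v\<close> by (auto simp: f_def)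
    qed
  qed
  have "phi c A U ?H' = (\<Sum>w\<in>U. f ?H' w)" by (simp add: phi_def f_def)
  also have "\<dots> \<le> (\<Sum>w\<in>U. f H w + (if w \<in> nbrs H v then 1 else 0) + (if w = v then E else 0))"
    by (rule sum_mono) (use pt in auto)
  also have "\<dots> = (\<Sum>w\<in>U. f H w) + (\<Sum>w\<in>U. (if w \<in> nbrs H v then 1 else 0)) + E"
    using vH sub fU by (auto simp: sum.distrib)
  also have "(\<Sum>w\<in>U. (if w \<in> nbrs H v then 1 else 0)) = int (card (U \<inter> nbrs H v))"
    using fU by (simp add: sum.If_cases)
  also have "U \<inter> nbrs H v = nbrs H v" using nbrs_sub[OF sg, of v] sub by blast
  also have "int (card (nbrs H v)) = int (deg H v)" using vH by (simp add: deg_def)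
  finally show ?thesis by (simp add: phi_def f_def E_def)
qed

lemma phi_split:
  assumes "finite U" "A \<subseteq> U"
  shows "phi c A U H = (if c then (\<Sum>w\<in>U. if w \<in> verts H then 2 - int (min (deg H w) 2) else 0) else 0)
            - (\<Sum>w\<in>A. int (max (deg H w) 2))"
proof -
  have "(\<Sum>w\<in>U. if w \<in> A then int (max (deg H w) 2) else 0) = (\<Sum>w\<in>U \<inter> A. int (max (deg H w) 2))"
    using assms by (simp add: sum.inter_restrict)
  also have "U \<inter> A = A" using assms by blast
  finally have e: "(\<Sum>w\<in>U. if w \<in> A then int (max (deg H w) 2) else 0) = (\<Sum>w\<in>A. int (max (deg H w) 2))" .
  show ?thesis unfolding phi_def sum_subtractf e by (cases c) auto
qed

lemma defi_nonneg: "(\<Sum>w\<in>U. if w \<in> verts H then 2 - int (min (deg H w) 2) else 0) \<ge> (0::int)"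
  by (rule sum_nonneg) auto

lemma defi_zero: "\<forall>w\<in>verts H. deg H w \<ge> 2 \<Longrightarrow>
   (\<Sum>w\<in>U. if w \<in> verts H then 2 - int (min (deg H w) 2) else 0) = (0::int)"
  by (rule sum.neutral) auto

lemma st_at_0: "st_at G k evs 0 = (G, k, {})"
  by (simp add: st_at_def)

lemma st_at_Suc: "i < length evs \<Longrightarrow> st_at G k evs (Suc i) = apply_ev (evs ! i) (st_at G k evs i)"
  by (simp add: st_at_def take_Suc_conv_app_nth)

lemma sG_apply_minus: "minus_ev e = Some v \<Longrightarrow> sG (apply_ev e st) = del_verts (sG st) {v}"
  by (cases e; cases st) (auto simp: sG_def)

lemma sG_apply_1: "sG (apply_ev (Ev1 v) st) = del_verts (sG st) {v}"
  by (cases st) (auto simp: sG_def)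

lemma sG_apply_6: "sG (apply_ev (Ev6 v) st) = sG st"
  by (cases st) (auto simp: sG_def)

lemma sG_apply_sub: "verts (sG (apply_ev e st)) \<subseteq> verts (sG st)"
  by (cases e; cases st) (auto simp: sG_def)

lemma sG_apply_simple: "simple_graph (sG st) \<Longrightarrow> simple_graph (sG (apply_ev e st))"
  by (cases e; cases st) (auto simp: sG_def simple_del)

lemma simple_st: "simple_graph G \<Longrightarrow> i \<le> length evs \<Longrightarrow> simple_graph (sG (st_at G k evs i))"
proof (induction i)
  case 0 then show ?case by (simp add: st_at_0 sG_def)
next
  case (Suc i) then show ?case by (simp add: st_at_Suc sG_apply_simple)
qed

lemma verts_mono: "j \<le> i \<Longrightarrow> i \<le> length evs \<Longrightarrow> verts (sG (st_at G k evs i)) \<subseteq> verts (sG (st_at G k evs j))"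
proof (induction i rule: dec_induct)
  case base then show ?case by simp
next
  case (step i) then show ?case using sG_apply_sub st_at_Suc
    by (metis Suc_le_lessD dual_order.trans less_imp_le_nat)
qed

lemma nm_props:
  assumes "j < length evs"
  shows "j < next_minus evs j" "next_minus evs j \<le> length evs"
    "\<And>i. j < i \<Longrightarrow> i < next_minus evs j \<Longrightarrow> minus_ev (evs ! i) = None"
    "Suc j = length evs \<or> minus_ev (evs ! Suc j) \<noteq> None \<Longrightarrow> next_minus evs j = Suc j"
proof -
  let ?P = "\<lambda>j'. j < j' \<and> (j' = length evs \<or> minus_ev (evs ! j') \<noteq> None)"
  have P: "?P (length evs)" using assms by simp
  have L: "?P (next_minus evs j)" unfolding next_minus_def by (rule LeastI[of ?P, OF P])
  then show "j < next_minus evs j" by simp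
  show "next_minus evs j \<le> length evs" unfolding next_minus_def by (rule Least_le[of ?P, OF P])
  show "minus_ev (evs ! i) = None" if "j < i" "i < next_minus evs j" for i
  proof -
    have "\<not> ?P i" using that(2) unfolding next_minus_def by (rule not_less_Least)
    moreover have "i \<noteq> length evs" using that(2) \<open>next_minus evs j \<le> length evs\<close> by simp
    ultimately show ?thesis using that(1) by simp
  qed
  show "next_minus evs j = Suc j" if "Suc j = length evs \<or> minus_ev (evs ! Suc j) \<noteq> None"
  proof -
    have "next_minus evs j \<le> Suc j" unfolding next_minus_def by (rule Least_le[of ?P]) (use that in auto)
    then show ?thesis using L by simp
  qed
qed

theorem mainTheorem5:
  fixes G :: "'a graph" and k :: int and evs :: "'a fvs_event list"
    and j :: nat and x :: 'a
  assumes "simple_graph G"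
    and "solution_path G k evs"
    and "j < length evs"
    and "minus_ev (evs ! j) = Some x"
  shows "(\<Sum>u \<in> Fprime evs. eff_dec G k evs u j) \<le> int (deg (sG (st_at G k evs j)) x)"
proof -
  note sg0 = assms(1) and jl = assms(3) and mx = assms(4)
  obtain m where mle: "m \<le> length evs"
    and leg: "\<And>j'. j' < m \<Longrightarrow> legal_ev (st_at G k evs j') (evs ! j')"
    and e4: "\<And>j'. m \<le> j' \<Longrightarrow> j' < length evs \<Longrightarrow> \<exists>x. evs ! j' = Ev4 x \<and> loop4_ok (st_at G k evs j') x"
    using assms(2) unfolding solution_path_def by blast
  define st where "st = st_at G k evs"
  define G0 where "G0 = sG (st j)"
  define F0 where "F0 = sF (st j)"
  define n where "n = next_minus evs j"
  define Hn where "Hn = sG (st n)"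
  define A where "A = {u \<in> Fprime evs. u \<in> F0}"
  define U where "U = verts G0 \<union> A"
  have fFp: "finite (Fprime evs)"
  proof -
    have "Fprime evs = Ev6 -` set evs" by (auto simp: Fprime_def)
    then show ?thesis by (simp add: finite_vimageI inj_def)
  qed
  have fA: "finite A" using fFp by (simp add: A_def)
  have simp_i: "\<And>i. i \<le> length evs \<Longrightarrow> simple_graph (sG (st i))"
    using simple_st[OF sg0] by (simp add: st_def)
  have fU: "finite U" using simp_i[of j] jl fA by (simp add: U_def simple_graph_def G0_def)
  have AU: "A \<subseteq> U" by (simp add: U_def)
  have nprops: "j < n" "n \<le> length evs" "\<And>i. j < i \<Longrightarrow> i < n \<Longrightarrow> minus_ev (evs ! i) = None"
    using nm_props[OF jl] by (auto simp: n_def)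
  have vsub: "verts (sG (st i)) \<subseteq> U" if "j \<le> i" "i \<le> length evs" for i
  proof -
    have "verts (sG (st_at G k evs i)) \<subseteq> verts (sG (st_at G k evs j))"
      by (rule verts_mono[OF that])
    then show ?thesis unfolding U_def G0_def st_def by blast
  qed
  have H1: "sG (st (Suc j)) = del_verts G0 {x}"
    using st_at_Suc[OF jl] sG_apply_minus[OF mx] by (simp add: st_def G0_def)
  have xinfo: "x \<in> verts G0 \<and> x \<notin> F0 \<and>
      ((\<forall>w\<in>verts G0. deg G0 w \<ge> 2) \<or> n = Suc j)"
  proof (cases "j < m")
    case True
    have L: "legal_ev (st j) (evs ! j)" using leg[OF True] by (simp add: st_def)
    have "(\<forall>w\<in>verts G0. deg G0 w \<ge> 2) \<and> x \<in> verts G0 \<and> x \<notin> F0"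
    proof (cases "evs ! j")
      case (Ev2 v)
      then have v: "v = x" using mx by simp
      have a: "\<not> (\<exists>w. step1_cond (st j) w)" "step2_cond (st j) x" using L Ev2 v by simp_all
      have "x \<in> verts (sG (st j)) - sF (st j)" using a(2) unfolding step2_cond_def by blast
      moreover have "\<forall>w\<in>verts G0. deg G0 w \<ge> 2" using a(1) unfolding step1_cond_def G0_def by force
      ultimately show ?thesis unfolding G0_def F0_def by blast
    next
      case (Ev5 v)
      then have v: "v = x" using mx by simp
      have a: "reaches_step3 (st j)" "max_choice (st j) x" using L Ev5 v by simp_all
      have b1: "x \<in> verts (sG (st j)) - sF (st j)" using a(2) unfolding max_choice_def by blast
      have b2: "\<not> (\<exists>w. step1_cond (st j) w)" using a(1) unfolding reaches_step3_def by blast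
      have b3: "\<forall>w\<in>verts G0. deg G0 w \<ge> 2" using b2 unfolding step1_cond_def G0_def by force
      show ?thesis using b1 b3 unfolding G0_def F0_def by blast
    qed (use L mx in auto)
    then show ?thesis by blast
  next
    case False
    have "\<exists>y. evs ! j = Ev4 y \<and> loop4_ok (st_at G k evs j) y" using e4[of j] False jl by simp
    then obtain y where y: "evs ! j = Ev4 y" "loop4_ok (st j) y" unfolding st_def by blast
    have "y = x" using y mx by simp
    have "x \<notin> sF (st j) \<and> (\<exists>cs. is_cycle (sG (st j)) cs \<and> x \<in> set cs)"
      using y(2) \<open>y = x\<close> unfolding loop4_ok_def by blast
    then have "x \<in> verts G0 \<and> x \<notin> F0"
      unfolding is_cycle_def G0_def F0_def by blast
    moreover have "n = Suc j"
    proof -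
      have "Suc j = length evs \<or> minus_ev (evs ! Suc j) \<noteq> None"
      proof (cases "Suc j = length evs")
        case False
        then have "Suc j < length evs" using jl by simp
        then obtain z where "evs ! Suc j = Ev4 z" using e4[of "Suc j"] \<open>\<not> j < m\<close> by auto
        then show ?thesis by simp
      qed simp
      then show ?thesis using nm_props(4)[OF jl] n_def by simp
    qed
    ultimately show ?thesis by blast
  qed
  have xA: "x \<notin> A" using xinfo by (simp add: A_def)
  have sgG0: "simple_graph G0" using simp_i[of j] jl by (simp add: G0_def)
  have step_x: "phi c A U (sG (st (Suc j))) \<le> phi c A U G0 + int (deg G0 x)
      - (if c then 2 - int (min (deg G0 x) 2) else 0)" for c
  proof -
    have "verts G0 \<subseteq> U" by (simp add: U_def)
    then show ?thesis using phi_del[OF sgG0, of x U c A] xinfo xA fU H1 by (cases c) simp_all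
  qed
  have sumeq: "(\<Sum>u \<in> Fprime evs. eff_dec G k evs u j)
      = (\<Sum>w\<in>A. int (max (deg G0 w) 2)) - (\<Sum>w\<in>A. int (max (deg Hn w) 2))"
  proof -
    have "(\<Sum>u \<in> Fprime evs. eff_dec G k evs u j)
        = (\<Sum>u \<in> Fprime evs. if u \<in> F0 then int (max (deg G0 u) 2) - int (max (deg Hn u) 2) else 0)"
      unfolding eff_dec_def G0_def F0_def Hn_def n_def st_def by simp
    also have "\<dots> = (\<Sum>u \<in> Fprime evs \<inter> F0. int (max (deg G0 u) 2) - int (max (deg Hn u) 2))"
      using fFp by (simp add: sum.inter_restrict)
    also have "Fprime evs \<inter> F0 = A" by (auto simp: A_def)
    finally show ?thesis by (simp add: sum_subtractf)
  qed
  have "int (deg (sG (st_at G k evs j)) x) = int (deg G0 x)" by (simp add: G0_def st_def)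
  moreover have "(\<Sum>u \<in> Fprime evs. eff_dec G k evs u j) \<le> int (deg G0 x)"
  proof (cases "n = Suc j")
    case True
    have "phi False A U Hn \<le> phi False A U G0 + int (deg G0 x)"
      using step_x[of False] True by (simp add: Hn_def)
    then show ?thesis using sumeq phi_split[OF fU AU, of False] by simp
  next
    case False
    then have all2: "\<forall>w\<in>verts G0. deg G0 w \<ge> 2" using xinfo by blast
    have chain: "phi True A U (sG (st i)) \<le> phi True A U (sG (st (Suc j)))"
      if "Suc j \<le> i" "i \<le> n" for i
      using that
    proof (induction i rule: dec_induct)
      case base then show ?case by simp
    next
      case (step i)
      have il: "i < length evs" using step nprops by simp
      have mn: "minus_ev (evs ! i) = None" using nprops(3)[of i] step by simp
      have im: "i < m"
      proof (rule ccontr)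
        assume "\<not> i < m"
        then obtain z where "evs ! i = Ev4 z" using e4[of i] il by auto
        then show False using mn by simp
      qed
      have sgi: "simple_graph (sG (st i))" using simp_i il by simp
      have vi: "verts (sG (st i)) \<subseteq> U" using vsub[of i] step il by simp
      have "phi True A U (sG (st (Suc i))) \<le> phi True A U (sG (st i))"
      proof (cases "evs ! i")
        case (Ev1 v)
        have c: "v \<in> verts (sG (st i))" "deg (sG (st i)) v < 2"
          using leg[OF im] Ev1 by (auto simp: step1_cond_def st_def)
        have "sG (st (Suc i)) = del_verts (sG (st i)) {v}"
          using st_at_Suc[OF il] Ev1 sG_apply_1 by (simp add: st_def)
        then show ?thesis using phi_del[OF sgi c(1) vi fU, of True A] c(2) by (cases "v \<in> A") (auto simp: max_def)
      next
        case (Ev6 v)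
        then show ?thesis using st_at_Suc[OF il] sG_apply_6[of v] by (simp add: st_def)
      qed (use mn in auto)
      then show ?case using step by simp
    qed
    have "phi True A U Hn \<le> phi True A U G0 + int (deg G0 x) - (2 - int (min (deg G0 x) 2))"
      using chain[of n] nprops step_x[of True] by (simp add: Hn_def)
    moreover have "deg G0 x \<ge> 2" using all2 xinfo by blast
    ultimately show ?thesis using sumeq phi_split[OF fU AU, of True] defi_zero[OF all2, where U=U]
      defi_nonneg[where U=U and H=Hn] by simp
  qed
  ultimately show ?thesis by simp
qed

end
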